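(* Let $G$ be a finite group and let $x_1, \dots, x_n$ be representatives of the distinct rational classes of $G$. Then $$|\mathrm{Solv}(G)| \leq \sum_{i=1}^n [G : N_G(\langle x_i \rangle)].$$
   Context: For a finite group $G$ and $x \in G$, the solvabilizer of $x$ in $G$ is $\mathrm{Sol}_G(x) = \{y \in G : \langle x, y \rangle \text{ is solvable}\}$; $\mathrm{Solv}(G) = \{\mathrm{Sol}_G(x) : x \in G\}$ is the set of distinct solvabilizers. The rational class of $x \in G$ is the union of the conjugacy classes $(x^i)^G$ over all integers $i$ with $\gcd(|x|, i) = 1$. *)

theory Defs
  imports "HOL-Algebra.Algebra"
begin

definition solvabilizer :: "('a, 'b) monoid_scheme \<Rightarrow> 'a \<Rightarrow> 'a set" where
  "solvabilizer G x = {y \<in> carrier G. solvable (subgroup_generated G {x, y})}"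

definition Solv :: "('a, 'b) monoid_scheme \<Rightarrow> 'a set set" where
  "Solv G = solvabilizer G ` carrier G"

definition conj_class :: "('a, 'b) monoid_scheme \<Rightarrow> 'a \<Rightarrow> 'a set" where
  "conj_class G x = {g \<otimes>\<^bsub>G\<^esub> x \<otimes>\<^bsub>G\<^esub> inv\<^bsub>G\<^esub> g | g. g \<in> carrier G}"

definition rational_class :: "('a, 'b) monoid_scheme \<Rightarrow> 'a \<Rightarrow> 'a set" where
  "rational_class G x =
     (\<Union>i \<in> {i :: int. coprime (int (group.ord G x)) i}. conj_class G (x [^]\<^bsub>G\<^esub> i))"

definition rational_classes :: "('a, 'b) monoid_scheme \<Rightarrow> 'a set set" where
  "rational_classes G = rational_class G ` carrier G"

end

theory Submission
  imports Defs
begin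

lemma (in group) sol_eq:
  assumes a: "a \<in> carrier G" and b: "b \<in> carrier G"
    and e: "generate G {a} = generate G {b}"
  shows "solvabilizer G a = solvabilizer G b"
proof -
  have gen: "generate G {a, y} \<subseteq> generate G {b, y}"
    if a: "a \<in> carrier G" and b: "b \<in> carrier G" and e: "generate G {a} = generate G {b}"
      and y: "y \<in> carrier G" for a b y
  proof (rule generate_subgroup_incl)
    have "a \<in> generate G {b}" using e generate.incl[of a "{a}" G] by auto
    also have "\<dots> \<subseteq> generate G {b, y}" by (rule mono_generate) auto
    finally show "{a, y} \<subseteq> generate G {b, y}" using generate.incl[of y "{b,y}" G] by auto
    show "subgroup (generate G {b, y}) G" using b y by (intro generate_is_subgroup) auto
  qed
  have "subgroup_generated G {a, y} = subgroup_generated G {b, y}" if y: "y \<in> carrier G" for y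
  proof -
    have "generate G {a, y} = generate G {b, y}"
      using gen[OF a b e y] gen[OF b a e[symmetric] y] by auto
    moreover have "carrier G \<inter> {a, y} = {a, y}" "carrier G \<inter> {b, y} = {b, y}" using a b y by auto
    ultimately show ?thesis unfolding subgroup_generated_def by simp
  qed
  then show ?thesis unfolding solvabilizer_def by auto
qed

lemma (in group) conj_generate:
  assumes g: "g \<in> carrier G" and a: "a \<in> carrier G"
  shows "generate G {g \<otimes> a \<otimes> inv g} = g <# generate G {a} #> inv g"
proof -
  define c where "c = (\<lambda>h. g \<otimes> h \<otimes> inv g)"
  have "c \<in> hom G G"
  proof (rule homI)
    show "\<And>x. x \<in> carrier G \<Longrightarrow> c x \<in> carrier G" using g by (simp add: c_def)
    show "\<And>x y. x \<in> carrier G \<Longrightarrow> y \<in> carrier G \<Longrightarrow> c (x \<otimes> y) = c x \<otimes> c y"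
    proof -
      fix x y assume "x \<in> carrier G" "y \<in> carrier G"
      moreover have "\<And>z. z \<in> carrier G \<Longrightarrow> inv g \<otimes> (g \<otimes> z) = z"
        using g by (simp add: m_assoc[symmetric])
      ultimately show "c (x \<otimes> y) = c x \<otimes> c y" using g by (simp add: c_def m_assoc)
    qed
  qed
  then interpret gh: group_hom G G c by (simp add: group_hom_axioms_def group_hom_def is_group)
  have "generate G (c ` {a}) = c ` generate G {a}" using a by (intro gh.generate_img) auto
  moreover have "c ` K = g <# K #> inv g" if "K \<subseteq> carrier G" for K
    using that g unfolding c_def l_coset_def r_coset_def
    by (auto simp: m_assoc)
  moreover have "generate G {a} \<subseteq> carrier G" using generate_in_carrier[of "{a}"] a by auto
  ultimately show ?thesis by (simp add: c_def)
qed

lemma (in group) coprime_generate: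
  assumes x: "x \<in> carrier G" and fin: "finite (carrier G)"
    and cp: "coprime (int (ord x)) i"
  shows "generate G {x [^] i} = generate G {x}"
proof
  show "generate G {x [^] i} \<subseteq> generate G {x}"
    using x by (intro generate_subgroup_incl generate_is_subgroup)
      (auto simp: generate_pow)
  obtain u v where uv: "u * int (ord x) + v * i = 1"
    using bezout_int[of "int (ord x)" i] cp by auto
  have "(x [^] i) [^] v = x [^] (i * v)" using x int_pow_pow by simp
  also have "\<dots> = x [^] (1::int)"
    using x uv by (subst int_pow_eq) (auto simp: algebra_simps intro!: dvdI[of _ _ "u"])
  also have "\<dots> = x" using x by simp
  finally have "x \<in> generate G {x [^] i}"
    using x generate_pow[of "x [^] i"] by (auto intro: exI[of _ v])
  then show "generate G {x} \<subseteq> generate G {x [^] i}"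
    using x by (intro generate_subgroup_incl generate_is_subgroup) auto
qed

lemma (in group) main_aux:
  fixes R :: "'a set"
  assumes "True"
    and "finite (carrier G)"
    and "R \<subseteq> carrier G"
    and "bij_betw (rational_class G) R (rational_classes G)"
  shows "card (Solv G)
           \<le> (\<Sum>x\<in>R. card (rcosets\<^bsub>G\<^esub> (normalizer G (generate G {x}))))"
proof -
  note fin = assms(2)
  define act where "act = (\<lambda>g. \<lambda>H \<in> {H. H \<subseteq> carrier G}. g <#\<^bsub>G\<^esub> H #>\<^bsub>G\<^esub> inv\<^bsub>G\<^esub> g)"
  define Orb where "Orb x = orbit G act (generate G {x})" for x
  define pick where "pick H = (SOME a. a \<in> carrier G \<and> generate G {a} = H)" for H
  have GA: "group_action G {H. H \<subseteq> carrier G} act"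
    unfolding act_def by (rule action_by_conjugation_on_power_set)
  have finR: "finite R" using assms(3) fin finite_subset by blast
  have A: "\<exists>x\<in>R. generate G {y} \<in> Orb x" if y: "y \<in> carrier G" for y
  proof -
    have "rational_class G y \<in> rational_classes G" using y unfolding rational_classes_def by auto
    then obtain x where x: "x \<in> R" and rx: "rational_class G x = rational_class G y"
      using assms(4) unfolding bij_betw_def by (metis imageE)
    have "y \<in> conj_class G (y [^] (1::int))"
      unfolding conj_class_def using y by (auto intro!: exI[of _ \<one>])
    then have "y \<in> rational_class G y" unfolding rational_class_def by (auto intro!: exI[of _ 1])
    then have "y \<in> rational_class G x" using rx by simp
    then obtain i g where cp: "coprime (int (ord x)) i" and g: "g \<in> carrier G"
      and yeq: "y = g \<otimes> x [^] i \<otimes> inv g"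
      unfolding rational_class_def conj_class_def by auto
    have xc: "x \<in> carrier G" using x assms(3) by auto
    have "generate G {y} = g <# generate G {x [^] i} #> inv g"
      using yeq g xc conj_generate by simp
    also have "\<dots> = g <# generate G {x} #> inv g" using coprime_generate[OF xc fin cp] by simp
    also have "\<dots> = act g (generate G {x})"
      unfolding act_def using generate_in_carrier[of "{x}"] xc by auto
    finally show ?thesis using x g unfolding Orb_def orbit_def by auto
  qed
  have B: "Solv G \<subseteq> (\<Union>x\<in>R. (\<lambda>H. solvabilizer G (pick H)) ` Orb x)"
  proof
    fix S assume "S \<in> Solv G"
    then obtain y where y: "y \<in> carrier G" and S: "S = solvabilizer G y" unfolding Solv_def by auto
    obtain x where x: "x \<in> R" and o: "generate G {y} \<in> Orb x" using A[OF y] by auto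
    have p: "pick (generate G {y}) \<in> carrier G \<and> generate G {pick (generate G {y})} = generate G {y}"
      unfolding pick_def by (rule someI[of _ y]) (use y in auto)
    have "S = solvabilizer G (pick (generate G {y}))" using S sol_eq[of "pick (generate G {y})" y] p y by auto
    then show "S \<in> (\<Union>x\<in>R. (\<lambda>H. solvabilizer G (pick H)) ` Orb x)" using x o by auto
  qed
  have C: "card (Orb x) = card (rcosets (normalizer G (generate G {x})))" if x: "x \<in> carrier G" for x
  proof -
    have E: "generate G {x} \<in> {H. H \<subseteq> carrier G}" using generate_in_carrier[of "{x}"] x by auto
    have stab: "stabilizer G act (generate G {x}) = normalizer G (generate G {x})"
      unfolding normalizer_def act_def by simp
    have sub: "subgroup (normalizer G (generate G {x})) G"
      using E by (intro normalizer_imp_subgroup) auto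
    have o1: "card (Orb x) * card (normalizer G (generate G {x})) = order G"
      using group_action.orbit_stabilizer_theorem[OF GA E] stab unfolding Orb_def by simp
    have o2: "card (rcosets (normalizer G (generate G {x}))) * card (normalizer G (generate G {x})) = order G"
      using lagrange[OF sub] .
    have "card (normalizer G (generate G {x})) > 0"
      using sub fin subgroup.one_closed[OF sub] subgroup.subset[OF sub]
      by (metis card_gt_0_iff empty_iff finite_subset)
    then show ?thesis using o1 o2 by (metis mult_right_cancel not_gr0)
  qed
  have finO: "finite (Orb x)" if "x \<in> carrier G" for x
  proof -
    have "Orb x \<subseteq> {H. H \<subseteq> carrier G}"
      using group_action.element_image[OF GA] generate_in_carrier[of "{x}"] that
      unfolding Orb_def orbit_def by auto
    moreover have "finite {H. H \<subseteq> carrier G}" using fin by simp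
    ultimately show ?thesis using finite_subset by blast
  qed
  have "card (Solv G) \<le> card (\<Union>x\<in>R. (\<lambda>H. solvabilizer G (pick H)) ` Orb x)"
    using B finR finO assms(3) by (intro card_mono) auto
  also have "\<dots> \<le> (\<Sum>x\<in>R. card ((\<lambda>H. solvabilizer G (pick H)) ` Orb x))"
    by (rule card_UN_le[OF finR])
  also have "\<dots> \<le> (\<Sum>x\<in>R. card (Orb x))"
    by (intro sum_mono card_image_le) (use finO assms(3) in auto)
  also have "\<dots> = (\<Sum>x\<in>R. card (rcosets (normalizer G (generate G {x}))))"
    using C assms(3) by (intro sum.cong) auto
  finally show ?thesis .
qed

theorem corollary6p3:
  fixes G :: "('a, 'b) monoid_scheme" and R :: "'a set"
  assumes "group G"
    and "finite (carrier G)"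
    and "R \<subseteq> carrier G"
    and "bij_betw (rational_class G) R (rational_classes G)"
  shows "card (Solv G)
           \<le> (\<Sum>x\<in>R. card (rcosets\<^bsub>G\<^esub> (normalizer G (generate G {x}))))"
  using group.main_aux[OF assms(1) TrueI assms(2-4)] .

end
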